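(* Let $G$ be a connected graph with minimum degree $\delta(G)\ge 3$, and let $D\subseteq V(G)$ be a connected $3$-dominating set of $G$. Then $px_3(G)\le px_3(G[D])+1$. Moreover, this bound is tight (there are such graphs $G$ and sets $D$ with equality).
   Context: All graphs are finite, simple and undirected. For $D\subseteq V(G)$, $G[D]$ is the induced subgraph. A set $D$ is a $3$-dominating set of $G$ if every vertex of $V(G)\setminus D$ is adjacent to at least $3$ distinct vertices of $D$; it is connected if $G[D]$ is connected. An edge-coloring assigns colors to edges, adjacent edges being allowed to share a color. A tree in an edge-colored graph is proper if no two adjacent edges of it receive the same color. An edge-coloring of a connected graph $H$ is a $3$-proper coloring if for every $3$-element set $S\subseteq V(H)$ there is a proper tree in $H$ containing all vertices of $S$; $px_3(H)$ is the minimum number of colors in a $3$-proper coloring of $H$. *)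

theory Defs
  imports Main
begin

definition graph :: "'a set \<Rightarrow> 'a set set \<Rightarrow> bool" where
  "graph V E \<longleftrightarrow> finite V \<and> (\<forall>e\<in>E. \<exists>u v. e = {u, v} \<and> u \<in> V \<and> v \<in> V \<and> u \<noteq> v)"

definition induced_edges :: "'a set set \<Rightarrow> 'a set \<Rightarrow> 'a set set" where
  "induced_edges E D = {e \<in> E. e \<subseteq> D}"

definition degree :: "'a set \<Rightarrow> 'a set set \<Rightarrow> 'a \<Rightarrow> nat" where
  "degree V E v = card {u \<in> V. {u, v} \<in> E}"

definition min_degree_ge :: "'a set \<Rightarrow> 'a set set \<Rightarrow> nat \<Rightarrow> bool" where
  "min_degree_ge V E k \<longleftrightarrow> (\<forall>v\<in>V. degree V E v \<ge> k)"

definition walk :: "'a set set \<Rightarrow> 'a list \<Rightarrow> bool" where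
  "walk E xs \<longleftrightarrow> (\<forall>i. Suc i < length xs \<longrightarrow> {xs ! i, xs ! Suc i} \<in> E)"

definition connected_graph :: "'a set \<Rightarrow> 'a set set \<Rightarrow> bool" where
  "connected_graph V E \<longleftrightarrow> V \<noteq> {} \<and>
     (\<forall>u\<in>V. \<forall>v\<in>V. \<exists>xs. xs \<noteq> [] \<and> hd xs = u \<and> last xs = v \<and> set xs \<subseteq> V \<and> walk E xs)"

definition is_cycle :: "'a set set \<Rightarrow> 'a list \<Rightarrow> bool" where
  "is_cycle E xs \<longleftrightarrow> distinct xs \<and> length xs \<ge> 3 \<and>
     (\<forall>i < length xs. {xs ! i, xs ! ((i + 1) mod length xs)} \<in> E)"

definition acyclic_graph :: "'a set \<Rightarrow> 'a set set \<Rightarrow> bool" where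
  "acyclic_graph V E \<longleftrightarrow> \<not> (\<exists>xs. set xs \<subseteq> V \<and> is_cycle E xs)"

definition is_tree :: "'a set \<Rightarrow> 'a set set \<Rightarrow> bool" where
  "is_tree V E \<longleftrightarrow> connected_graph V E \<and> acyclic_graph V E"

definition subgraph :: "'a set \<Rightarrow> 'a set set \<Rightarrow> 'a set \<Rightarrow> 'a set set \<Rightarrow> bool" where
  "subgraph VT ET V E \<longleftrightarrow> VT \<subseteq> V \<and> ET \<subseteq> E \<and> (\<forall>e\<in>ET. e \<subseteq> VT)"

definition proper_edges :: "('a set \<Rightarrow> nat) \<Rightarrow> 'a set set \<Rightarrow> bool" where
  "proper_edges c ET \<longleftrightarrow> (\<forall>e1\<in>ET. \<forall>e2\<in>ET. e1 \<noteq> e2 \<and> e1 \<inter> e2 \<noteq> {} \<longrightarrow> c e1 \<noteq> c e2)"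

definition proper_tree_containing ::
  "'a set \<Rightarrow> 'a set set \<Rightarrow> ('a set \<Rightarrow> nat) \<Rightarrow> 'a set \<Rightarrow> bool" where
  "proper_tree_containing V E c S \<longleftrightarrow>
     (\<exists>VT ET. subgraph VT ET V E \<and> is_tree VT ET \<and> S \<subseteq> VT \<and> proper_edges c ET)"

definition k_proper_coloring :: "nat \<Rightarrow> 'a set \<Rightarrow> 'a set set \<Rightarrow> ('a set \<Rightarrow> nat) \<Rightarrow> bool" where
  "k_proper_coloring k V E c \<longleftrightarrow>
     (\<forall>S. S \<subseteq> V \<and> card S = k \<longrightarrow> proper_tree_containing V E c S)"

definition pxk :: "nat \<Rightarrow> 'a set \<Rightarrow> 'a set set \<Rightarrow> nat" where
  "pxk k V E = (LEAST n. \<exists>c. (\<forall>e\<in>E. c e < n) \<and> k_proper_coloring k V E c)"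

definition k_dominating :: "nat \<Rightarrow> 'a set \<Rightarrow> 'a set set \<Rightarrow> 'a set \<Rightarrow> bool" where
  "k_dominating k V E D \<longleftrightarrow> D \<subseteq> V \<and> (\<forall>v\<in>V - D. card {u \<in> D. {u, v} \<in> E} \<ge> k)"

definition connected_k_dominating :: "nat \<Rightarrow> 'a set \<Rightarrow> 'a set set \<Rightarrow> 'a set \<Rightarrow> bool" where
  "connected_k_dominating k V E D \<longleftrightarrow>
     k_dominating k V E D \<and> connected_graph D (induced_edges E D)"

end

theory Submission
  imports Defs
begin

lemma walk_Nil[simp]: "walk E []" by (simp add: walk_def)
lemma walk_single[simp]: "walk E [x]" by (simp add: walk_def)
lemma walk_Cons2[simp]: "walk E (x#y#xs) \<longleftrightarrow> {x,y}\<in>E \<and> walk E (y#xs)"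
proof
  assume w: "walk E (x#y#xs)"
  have "Suc 0 < length (x#y#xs)" by simp
  then have "{(x#y#xs)!0, (x#y#xs)!Suc 0}\<in>E" using w unfolding walk_def by blast
  then have "{x,y}\<in>E" by simp
  moreover have "walk E (y#xs)" unfolding walk_def
  proof (intro allI impI)
    fix i assume "Suc i < length (y#xs)"
    then have "Suc (Suc i) < length (x#y#xs)" by simp
    then show "{(y#xs)!i, (y#xs)!Suc i}\<in>E" using w unfolding walk_def by (metis nth_Cons_Suc)
  qed
  ultimately show "{x,y}\<in>E \<and> walk E (y#xs)" by simp
next
  assume h: "{x,y}\<in>E \<and> walk E (y#xs)"
  show "walk E (x#y#xs)" unfolding walk_def
  proof (intro allI impI)
    fix i assume i: "Suc i < length (x#y#xs)"
    show "{(x#y#xs)!i, (x#y#xs)!Suc i}\<in>E"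
    proof (cases i)
      case 0 then show ?thesis using h by simp
    next
      case (Suc j) then show ?thesis using h i unfolding walk_def by auto
    qed
  qed
qed

lemma walk_tl: "walk E (x#xs) \<Longrightarrow> walk E xs"
  by (cases xs) auto

lemma walk_join: "walk E ws \<Longrightarrow> walk E ys \<Longrightarrow> ws \<noteq> [] \<Longrightarrow> ys \<noteq> [] \<Longrightarrow> last ws = hd ys
  \<Longrightarrow> walk E (ws @ tl ys)"
proof (induction ws rule: induct_list012)
  case 1 then show ?case by simp
next
  case (2 x) then show ?case by (cases ys) auto
next
  case (3 x y zs)
  have "walk E ((y#zs) @ tl ys)"
    using "3.IH"(2) "3.prems" by simp
  then show ?case using "3.prems"(1) by simp
qed

lemma walk_rev: "walk E xs \<Longrightarrow> walk E (rev xs)"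
proof (induction xs rule: induct_list012)
  case (3 x y zs)
  have "walk E (rev (y#zs))" using 3 by simp
  moreover have "walk E [y,x]" using 3 by (simp add: insert_commute)
  ultimately have "walk E (rev (y#zs) @ tl [y,x])"
    by (intro walk_join) auto
  then show ?case by simp
qed auto

lemma walk_leave:
  "walk E xs \<Longrightarrow> xs \<noteq> [] \<Longrightarrow> hd xs \<in> A \<Longrightarrow> last xs \<notin> A \<Longrightarrow>
   \<exists>i. Suc i < length xs \<and> xs!i \<in> A \<and> xs!Suc i \<notin> A"
proof (induction xs rule: induct_list012)
  case 1 then show ?case by simp
next
  case (2 x) then show ?case by simp
next
  case (3 x y zs)
  show ?case
  proof (cases "y \<in> A")
    case True
    have w: "walk E (y#zs)" using "3.prems"(1) by simp
    have l: "last (y#zs) \<notin> A" using "3.prems"(4) by simp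
    have "\<exists>i. Suc i < length (y#zs) \<and> (y#zs)!i \<in> A \<and> (y#zs)!Suc i \<notin> A"
      by (rule "3.IH"(2)[OF w _ _ l]) (use True in simp_all)
    then obtain i where "Suc i < length (y#zs)" "(y#zs)!i \<in> A" "(y#zs)!Suc i \<notin> A"
      by blast
    then show ?thesis by (intro exI[of _ "Suc i"]) simp
  next
    case False
    have "x \<in> A" using "3.prems"(3) by simp
    then show ?thesis using False by (intro exI[of _ 0]) simp
  qed
qed
lemma conn_walk:
  assumes "connected_graph V E" "u \<in> V" "v \<in> V"
  obtains xs where "xs \<noteq> []" "hd xs = u" "last xs = v" "set xs \<subseteq> V" "walk E xs"
proof -
  have "\<forall>u\<in>V. \<forall>v\<in>V. \<exists>xs. xs \<noteq> [] \<and> hd xs = u \<and> last xs = v \<and> set xs \<subseteq> V \<and> walk E xs"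
    using assms(1) unfolding connected_graph_def by (rule conjunct2)
  then have "\<exists>xs. xs \<noteq> [] \<and> hd xs = u \<and> last xs = v \<and> set xs \<subseteq> V \<and> walk E xs"
    using assms(2,3) by blast
  then show ?thesis using that by blast
qed

lemma sep:
  assumes "connected_graph V E" "u \<in> V" "u \<in> A" "v \<in> V" "v \<notin> A"
  shows "\<exists>e\<in>E. e \<inter> A \<noteq> {} \<and> \<not> e \<subseteq> A"
proof -
  obtain xs where xs: "xs \<noteq> []" "hd xs = u" "last xs = v" "walk E xs"
    using conn_walk[OF assms(1,2,4)] by metis
  have "hd xs \<in> A" "last xs \<notin> A" using xs assms by auto
  then obtain i where i: "Suc i < length xs" "xs!i \<in> A" "xs!Suc i \<notin> A"
    using walk_leave[OF xs(4) xs(1)] by blast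
  have 1: "{xs!i, xs!Suc i} \<in> E" using xs(4) i(1) unfolding walk_def by simp
  have 2: "{xs!i, xs!Suc i} \<inter> A \<noteq> {}" using i(2) by blast
  have 3: "\<not> {xs!i, xs!Suc i} \<subseteq> A" using i(3) by simp
  show ?thesis using 1 2 3 by (intro bexI[of _ "{xs!i, xs!Suc i}"]) simp_all
qed

lemma walk_replace:
  assumes rep: "\<And>x y. {x,y} \<in> E \<Longrightarrow> x\<in>V \<Longrightarrow> y\<in>V \<Longrightarrow>
     (\<exists>ws. ws \<noteq> [] \<and> hd ws = x \<and> last ws = y \<and> set ws \<subseteq> V \<and> walk E' ws)"
  shows "walk E xs \<Longrightarrow> xs \<noteq> [] \<Longrightarrow> set xs \<subseteq> V \<Longrightarrow>
     \<exists>ys. ys \<noteq> [] \<and> hd ys = hd xs \<and> last ys = last xs \<and> set ys \<subseteq> V \<and> walk E' ys"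
proof (induction xs rule: induct_list012)
  case 1 then show ?case by simp
next
  case (2 x) then show ?case by (intro exI[of _ "[x]"]) simp
next
  case (3 x y zs)
  have w: "walk E (y#zs)" and xy: "{x,y}\<in>E" using "3.prems"(1) by simp_all
  have sv: "set (y#zs) \<subseteq> V" and xV: "x \<in> V" and yV: "y \<in> V" using "3.prems"(3) by simp_all
  have "\<exists>ys. ys \<noteq> [] \<and> hd ys = hd (y#zs) \<and> last ys = last (y#zs) \<and> set ys \<subseteq> V \<and> walk E' ys"
    by (rule "3.IH"(2)[OF w _ sv]) simp
  then obtain ys where ys: "ys \<noteq> []" "hd ys = y" "last ys = last (y#zs)" "set ys \<subseteq> V" "walk E' ys"
    by auto
  obtain ws where ws: "ws \<noteq> []" "hd ws = x" "last ws = y" "set ws \<subseteq> V" "walk E' ws"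
    using rep[OF xy xV yV] by blast
  have a: "walk E' (ws @ tl ys)" using ws ys by (intro walk_join) simp_all
  have b: "last (ws @ tl ys) = last (x#y#zs)"
    using ws ys by (cases ys) (auto split: if_splits)
  have c: "set (ws @ tl ys) \<subseteq> V" using ws(4) ys(4) by (cases ys) auto
  show ?case using a b c ws(1,2) by (intro exI[of _ "ws @ tl ys"]) simp
qed

lemma distinct_nth_neq: "distinct xs \<Longrightarrow> i < length xs \<Longrightarrow> j < length xs \<Longrightarrow> i \<noteq> j \<Longrightarrow> xs!i \<noteq> xs!j"
  by (simp add: nth_eq_iff_index_eq)

lemma cycle_walk:
  assumes cyc: "is_cycle E xs"
  shows "walk (E - {{xs!0, xs!1}}) (drop 1 xs @ [xs!0])"
proof -
  let ?n = "length xs"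
  have d: "distinct xs" and n3: "?n \<ge> 3" and ed: "\<And>i. i < ?n \<Longrightarrow> {xs!i, xs!((i+1) mod ?n)} \<in> E"
    using cyc unfolding is_cycle_def by auto
  let ?W = "drop 1 xs @ [xs!0]"
  have lenW: "length ?W = ?n" using n3 by simp
  have W1: "\<And>j. j < ?n - 1 \<Longrightarrow> ?W!j = xs!(Suc j)" using n3 by (simp add: nth_append)
  have W2: "?W!(?n - 1) = xs!0" using n3 by (simp add: nth_append)
  show ?thesis unfolding walk_def
  proof (intro allI impI)
    fix j assume j: "Suc j < length ?W"
    show "{?W!j, ?W!Suc j} \<in> E - {{xs!0, xs!1}}"
    proof (cases "Suc j < ?n - 1")
      case True
      have e1: "?W!j = xs!(Suc j)" "?W!Suc j = xs!(Suc (Suc j))" using True W1 by auto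
      have m: "(Suc j + 1) mod ?n = Suc (Suc j)" using True by simp
      have inE: "{xs!(Suc j), xs!(Suc (Suc j))} \<in> E" using ed[of "Suc j"] m True by simp
      have ne1: "xs!(Suc (Suc j)) \<noteq> xs!0" using d True by (intro distinct_nth_neq) auto
      have ne2: "xs!(Suc (Suc j)) \<noteq> xs!1" using d True by (intro distinct_nth_neq) auto
      have "{xs!(Suc j), xs!(Suc (Suc j))} \<noteq> {xs!0, xs!1}"
      proof
        assume "{xs!(Suc j), xs!(Suc (Suc j))} = {xs!0, xs!1}"
        then have "xs!(Suc (Suc j)) \<in> {xs!0, xs!1}" by (metis insertCI)
        then show False using ne1 ne2 by simp
      qed
      then show ?thesis using inE e1 by simp
    next
      case False
      then have jj: "Suc j = ?n - 1" "j < ?n - 1" using j lenW by auto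
      have e1: "?W!j = xs!(?n - 1)" "?W!Suc j = xs!0" using jj W1 W2 n3
        by (metis Suc_diff_1 Suc_lessD less_nat_zero_code less_trans_Suc nat_neq_iff zero_less_Suc) (use jj W2 in simp)
      have m0: "?n - 1 + 1 = ?n" using n3 by simp
      have m: "(?n - 1 + 1) mod ?n = 0" by (subst m0) simp
      have inE: "{xs!(?n - 1), xs!0} \<in> E" using ed[of "?n - 1"] m n3 by simp
      have ne1: "xs!(?n - 1) \<noteq> xs!0" using d n3 by (intro distinct_nth_neq) auto
      have ne2: "xs!(?n - 1) \<noteq> xs!1" using d n3 by (intro distinct_nth_neq) auto
      have "{xs!(?n - 1), xs!0} \<noteq> {xs!0, xs!1}"
      proof
        assume "{xs!(?n - 1), xs!0} = {xs!0, xs!1}"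
        then have "xs!(?n - 1) \<in> {xs!0, xs!1}" by (metis insertCI)
        then show False using ne1 ne2 by simp
      qed
      then show ?thesis using inE e1 by simp
    qed
  qed
qed

lemma remove_cycle_edge_connected:
  assumes conn: "connected_graph V E" and cyc: "is_cycle E xs" and sx: "set xs \<subseteq> V"
  shows "connected_graph V (E - {{xs!0, xs!1}})"
proof -
  let ?e0 = "{xs!0, xs!1}"
  let ?E' = "E - {?e0}"
  have n3: "length xs \<ge> 3" using cyc unfolding is_cycle_def by auto
  let ?W = "drop 1 xs @ [xs!0]"
  have wW: "walk ?E' ?W" by (rule cycle_walk[OF cyc])
  have wW': "walk ?E' (rev ?W)" by (rule walk_rev[OF wW])
  have "xs!0 \<in> set xs" using n3 by (intro nth_mem) linarith
  then have setW: "set ?W \<subseteq> V" using sx n3 by (auto dest: in_set_dropD)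
  have hdW: "hd ?W = xs!1"
  proof (cases xs)
    case Nil then show ?thesis using n3 by simp
  next
    case (Cons a l)
    then obtain b l' where "l = b # l'" using n3 by (cases l) auto
    then show ?thesis using Cons by simp
  qed
  have lastW: "last ?W = xs!0" by simp
  have rep: "\<exists>ws. ws \<noteq> [] \<and> hd ws = x \<and> last ws = y \<and> set ws \<subseteq> V \<and> walk ?E' ws"
    if xy: "{x,y} \<in> E" "x \<in> V" "y \<in> V" for x y
  proof (cases "{x,y} = ?e0")
    case False
    then have "walk ?E' [x,y]" using xy by simp
    then show ?thesis using xy by (intro exI[of _ "[x,y]"]) simp
  next
    case True
    then have "(x = xs!0 \<and> y = xs!1) \<or> (x = xs!1 \<and> y = xs!0)" by (simp add: doubleton_eq_iff)
    then show ?thesis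
    proof
      assume a: "x = xs!0 \<and> y = xs!1"
      have hr: "hd (rev ?W) = x" using a by (simp only: hd_rev lastW)
      have lr: "last (rev ?W) = y" using a by (simp only: last_rev hdW)
      have sr: "set (rev ?W) \<subseteq> V" using setW by (simp only: set_rev)
      have nr: "rev ?W \<noteq> []" by simp
      have "rev ?W \<noteq> [] \<and> hd (rev ?W) = x \<and> last (rev ?W) = y \<and> set (rev ?W) \<subseteq> V \<and> walk ?E' (rev ?W)"
        using hr lr sr nr wW' by (intro conjI)
      then show ?thesis by (rule exI)
    next
      assume "x = xs!1 \<and> y = xs!0"
      then show ?thesis using wW setW hdW lastW
        by (intro exI[of _ "?W"]) simp
    qed
  qed
  show ?thesis unfolding connected_graph_def
  proof (intro conjI ballI)
    show "V \<noteq> {}" using conn unfolding connected_graph_def by simp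
  next
    fix u v assume uv: "u \<in> V" "v \<in> V"
    obtain xs' where xs': "xs' \<noteq> []" "hd xs' = u" "last xs' = v" "set xs' \<subseteq> V" "walk E xs'"
      using conn_walk[OF conn uv] by metis
    show "\<exists>xs. xs \<noteq> [] \<and> hd xs = u \<and> last xs = v \<and> set xs \<subseteq> V \<and> walk ?E' xs"
      using walk_replace[of E V ?E', OF rep xs'(5) xs'(1) xs'(4)] xs' by simp
  qed
qed

lemma tree_exists:
  assumes conn: "connected_graph V E" and fin: "finite E" and sub: "\<forall>e\<in>E. e \<subseteq> V"
  shows "\<exists>ET. ET \<subseteq> E \<and> is_tree V ET"
proof -
  let ?P = "\<lambda>n. \<exists>ET. ET \<subseteq> E \<and> connected_graph V ET \<and> card ET = n"
  have "?P (card E)" using conn by blast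
  then have "?P (LEAST n. ?P n)" by (rule LeastI)
  then obtain ET where ET: "ET \<subseteq> E" "connected_graph V ET" "card ET = (LEAST n. ?P n)" by blast
  have "acyclic_graph V ET" unfolding acyclic_graph_def
  proof
    assume "\<exists>xs. set xs \<subseteq> V \<and> is_cycle ET xs"
    then obtain xs where xs: "set xs \<subseteq> V" "is_cycle ET xs" by blast
    let ?e0 = "{xs!0, xs!1}"
    have n3: "length xs \<ge> 3" using xs(2) unfolding is_cycle_def by auto
    have all: "\<forall>i<length xs. {xs ! i, xs ! ((i+1) mod length xs)} \<in> ET" using xs(2) unfolding is_cycle_def by blast
    have "{xs!0, xs!((0+1) mod length xs)} \<in> ET" by (rule all[rule_format]) (use n3 in linarith)
    moreover have "(0+1) mod length xs = 1" using n3 by simp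
    ultimately have e0: "?e0 \<in> ET" by simp
    have finET: "finite ET" using ET(1) fin finite_subset by blast
    have c1: "connected_graph V (ET - {?e0})" by (rule remove_cycle_edge_connected[OF ET(2) xs(2) xs(1)])
    have "?P (card (ET - {?e0}))" using c1 ET(1) by blast
    then have "(LEAST n. ?P n) \<le> card (ET - {?e0})" by (rule Least_le)
    moreover have "card (ET - {?e0}) < card ET" using finET e0 by (rule card_Diff1_less)
    ultimately show False using ET(3) by simp
  qed
  then show ?thesis using ET unfolding is_tree_def by blast
qed

lemma walk_mono: "walk E xs \<Longrightarrow> E \<subseteq> E' \<Longrightarrow> walk E' xs"
  unfolding walk_def by blast

lemma doub: "{a,b} = {b,c} \<Longrightarrow> a = c"
  by (metis doubleton_eq_iff)
lemma doub2: "{b,a} = {b,c} \<Longrightarrow> a = c"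
  by (metis doubleton_eq_iff)

lemma pendant_edge:
  assumes disj: "X \<inter> VT = {}" and g: "\<forall>x\<in>X. g x \<in> VT" and subT: "\<forall>e\<in>ET. e \<subseteq> VT"
    and x: "x \<in> X" and e: "e \<in> ET \<union> (\<lambda>x. {x, g x}) ` X" and xe: "x \<in> e"
  shows "e = {x, g x}"
proof -
  have "e \<notin> ET" using subT x xe disj by blast
  then obtain x' where x': "x' \<in> X" "e = {x', g x'}" using e by blast
  have "g x' \<noteq> x" using g x' x disj by blast
  then have "x = x'" using xe x' by blast
  then show ?thesis using x' by simp
qed

lemma add_leaves:
  assumes tree: "is_tree VT ET" and subT: "\<forall>e\<in>ET. e \<subseteq> VT"
    and disj: "X \<inter> VT = {}" and g: "\<forall>x\<in>X. g x \<in> VT"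
  shows "is_tree (VT \<union> X) (ET \<union> (\<lambda>x. {x, g x}) ` X)"
proof -
  let ?P = "(\<lambda>x. {x, g x}) ` X"
  let ?E' = "ET \<union> ?P"
  have conn: "connected_graph VT ET" and acyc: "acyclic_graph VT ET"
    using tree unfolding is_tree_def by auto
  have "connected_graph (VT \<union> X) ?E'" unfolding connected_graph_def
  proof (intro conjI ballI)
    show "VT \<union> X \<noteq> {}" using conn unfolding connected_graph_def by simp
  next
    fix u v assume u: "u \<in> VT \<union> X" and v: "v \<in> VT \<union> X"
    define u0 where "u0 = (if u \<in> X then g u else u)"
    define v0 where "v0 = (if v \<in> X then g v else v)"
    have u0: "u0 \<in> VT" using u g unfolding u0_def by auto
    have v0: "v0 \<in> VT" using v g unfolding v0_def by auto
    obtain ws where ws: "ws \<noteq> []" "hd ws = u0" "last ws = v0" "set ws \<subseteq> VT" "walk ET ws"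
      using conn_walk[OF conn u0 v0] by metis
    have ws': "walk ?E' ws" using ws(5) by (rule walk_mono) blast
    define ws1 where "ws1 = (if u \<in> X then [u, g u] @ tl ws else ws)"
    have w1: "walk ?E' ws1 \<and> ws1 \<noteq> [] \<and> hd ws1 = u \<and> last ws1 = v0 \<and> set ws1 \<subseteq> VT \<union> X"
    proof (cases "u \<in> X")
      case True
      have "{u, g u} \<in> ?E'" using True by blast
      then have "walk ?E' [u, g u]" by simp
      then have "walk ?E' ([u, g u] @ tl ws)" using ws' ws True unfolding u0_def
        by (intro walk_join) auto
      moreover have "last ([u, g u] @ tl ws) = v0" using ws True unfolding u0_def
        by (cases ws) (auto split: if_splits)
      moreover have "set ([u, g u] @ tl ws) \<subseteq> VT \<union> X" using ws(4) True g
        by (cases ws) auto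
      ultimately show ?thesis using True unfolding ws1_def by simp
    next
      case False
      then show ?thesis using ws ws' u unfolding ws1_def u0_def by auto
    qed
    define ws2 where "ws2 = (if v \<in> X then ws1 @ tl [g v, v] else ws1)"
    have w2: "walk ?E' ws2 \<and> ws2 \<noteq> [] \<and> hd ws2 = u \<and> last ws2 = v \<and> set ws2 \<subseteq> VT \<union> X"
    proof (cases "v \<in> X")
      case True
      have "{v, g v} \<in> ?E'" using True by blast
      then have "walk ?E' [g v, v]" by (simp add: insert_commute)
      then have "walk ?E' (ws1 @ tl [g v, v])" using w1 True unfolding v0_def
        by (intro walk_join) auto
      moreover have "hd (ws1 @ tl [g v, v]) = u" using w1 by simp
      ultimately show ?thesis using True w1 unfolding ws2_def by auto
    next
      case False
      then show ?thesis using w1 v unfolding ws2_def v0_def by auto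
    qed
    then show "\<exists>xs. xs \<noteq> [] \<and> hd xs = u \<and> last xs = v \<and> set xs \<subseteq> VT \<union> X \<and> walk ?E' xs"
      by blast
  qed
  moreover have "acyclic_graph (VT \<union> X) ?E'" unfolding acyclic_graph_def
  proof
    assume "\<exists>xs. set xs \<subseteq> VT \<union> X \<and> is_cycle ?E' xs"
    then obtain xs where sx: "set xs \<subseteq> VT \<union> X" and cyc: "is_cycle ?E' xs" by blast
    let ?n = "length xs"
    have d: "distinct xs" and n3: "?n \<ge> 3" and ed: "\<And>i. i < ?n \<Longrightarrow> {xs!i, xs!((i+1) mod ?n)} \<in> ?E'"
      using cyc unfolding is_cycle_def by auto
    show False
    proof (cases "\<exists>i<?n. xs!i \<in> X")
      case True
      then obtain i where i: "i < ?n" "xs!i \<in> X" by blast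
      have mlt: "(i+1) mod ?n < ?n" by (rule mod_less_divisor) (use n3 in linarith)
      obtain j k where jk: "j < ?n" "k < ?n" "(j+1) mod ?n = i" "k = (i+1) mod ?n" "j \<noteq> k"
      proof (cases "i = 0")
        case True
        have m0: "?n - 1 + 1 = ?n" using n3 by simp
        have a: "(?n - 1 + 1) mod ?n = i" using True by (subst m0) simp
        have b: "(i+1) mod ?n = 1" using True n3 by simp
        have j1: "?n - 1 < ?n" using n3 by linarith
        have ne: "?n - 1 \<noteq> (i+1) mod ?n" by (subst b) (use n3 in linarith)
        show ?thesis by (rule that[OF j1 mlt a refl ne])
      next
        case False
        have a: "(i - 1 + 1) mod ?n = i" using False i by simp
        have b: "i - 1 \<noteq> (i+1) mod ?n"
        proof (cases "i + 1 < ?n")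
          case True then show ?thesis by simp
        next
          case False
          then have "i + 1 = ?n" using i by simp
          then show ?thesis using n3 by simp
        qed
        have j1: "i - 1 < ?n" using i by linarith
        show ?thesis by (rule that[OF j1 mlt a refl b])
      qed
      have e1: "{xs!j, xs!((j+1) mod ?n)} \<in> ?E'" by (rule ed[OF jk(1)])
      then have e1: "{xs!j, xs!i} \<in> ?E'" by (simp only: jk(3))
      have e2: "{xs!i, xs!k} \<in> ?E'" unfolding jk(4) by (rule ed[OF i(1)])
      have p1: "{xs!j, xs!i} = {xs!i, g (xs!i)}"
        by (rule pendant_edge[OF disj g subT i(2) e1]) simp
      have p2: "{xs!i, xs!k} = {xs!i, g (xs!i)}"
        by (rule pendant_edge[OF disj g subT i(2) e2]) simp
      have "xs!j = g (xs!i)" using p1 by (rule doub)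
      moreover have "xs!k = g (xs!i)" using p2 by (rule doub2)
      ultimately have "xs!j = xs!k" by simp
      moreover have "xs!j \<noteq> xs!k" using d jk(1,2,5) by (rule distinct_nth_neq)
      ultimately show False by simp
    next
      case False
      have inVT: "set xs \<subseteq> VT"
      proof
        fix y assume "y \<in> set xs"
        then obtain i where i: "i < ?n" "xs!i = y" by (metis in_set_conv_nth)
        have "y \<notin> X" using False i by blast
        moreover have "y \<in> VT \<union> X" using sx \<open>y \<in> set xs\<close> by blast
        ultimately show "y \<in> VT" by blast
      qed
      have "is_cycle ET xs" unfolding is_cycle_def
      proof (intro conjI allI impI)
        show "distinct xs" by (rule d)
        show "3 \<le> ?n" by (rule n3)
      next
        fix i assume i: "i < ?n"
        have m: "(i+1) mod ?n < ?n" by (rule mod_less_divisor) (use n3 in linarith)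
        have in1: "xs!i \<in> VT" using inVT nth_mem[OF i] by (rule subsetD)
        have in2: "xs!((i+1) mod ?n) \<in> VT" using inVT nth_mem[OF m] by (rule subsetD)
        have np: "{xs!i, xs!((i+1) mod ?n)} \<notin> ?P"
        proof
          assume "{xs!i, xs!((i+1) mod ?n)} \<in> ?P"
          then obtain x' where x': "x' \<in> X" "{xs!i, xs!((i+1) mod ?n)} = {x', g x'}" by (auto simp: image_def)
          have "x' \<in> {xs!i, xs!((i+1) mod ?n)}" using x'(2) by simp
          then have "x' \<in> VT" using in1 in2 by auto
          then show False using x'(1) disj by blast
        qed
        show "{xs!i, xs!((i+1) mod ?n)} \<in> ET" using ed[OF i] np by (metis Un_iff)
      qed
      then show False using acyc inVT unfolding acyclic_graph_def by (simp only: not_ex) blast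
    qed
  qed
  ultimately show ?thesis unfolding is_tree_def by blast
qed

lemma sdr:
  assumes "finite X" "\<forall>x\<in>X. finite (N x) \<and> card X \<le> card (N x)"
  shows "\<exists>g. inj_on g X \<and> (\<forall>x\<in>X. g x \<in> N x)"
  using assms
proof (induction X rule: finite_induct)
  case empty then show ?case by simp
next
  case (insert x F)
  have "\<forall>y\<in>F. finite (N y) \<and> card F \<le> card (N y)" using insert by auto
  then obtain g where g: "inj_on g F" "\<forall>y\<in>F. g y \<in> N y" using insert.IH by blast
  have "card (g ` F) \<le> card F" by (rule card_image_le[OF insert.hyps(1)])
  also have "\<dots> < card (insert x F)" using insert.hyps by simp
  also have "\<dots> \<le> card (N x)" using insert.prems by simp
  finally have "card (g ` F) < card (N x)" .
  then have "\<not> N x \<subseteq> g ` F" using insert.prems by (metis card_mono finite_imageI insert.hyps(1) leD)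
  then obtain a where a: "a \<in> N x" "a \<notin> g ` F" by blast
  let ?g = "g(x := a)"
  have "inj_on ?g F" using g(1) insert.hyps(2) by (simp add: inj_on_def)
  moreover have "?g ` F = g ` F" using insert.hyps(2) by (auto simp: image_def)
  ultimately have "inj_on ?g (insert x F)" using a(2) insert.hyps(2) by simp
  moreover have "\<forall>y\<in>insert x F. ?g y \<in> N y" using g(2) a(1) insert.hyps(2) by auto
  ultimately show ?case by blast
qed

lemma graph_sub: "graph V E \<Longrightarrow> e \<in> E \<Longrightarrow> e \<subseteq> V"
proof -
  assume g: "graph V E" and e: "e \<in> E"
  have "\<forall>e\<in>E. \<exists>u v. e = {u, v} \<and> u \<in> V \<and> v \<in> V \<and> u \<noteq> v"
    using g unfolding graph_def by (rule conjunct2)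
  then obtain u v where "e = {u, v}" "u \<in> V" "v \<in> V" using e by meson
  then show "e \<subseteq> V" by simp
qed

lemma graph_finE: "graph V E \<Longrightarrow> finite E"
proof -
  assume g: "graph V E"
  have "E \<subseteq> Pow V" using graph_sub[OF g] by (simp add: subset_iff)
  moreover have "finite (Pow V)" using g unfolding graph_def by simp
  ultimately show "finite E" by (rule finite_subset)
qed

lemma coloring_exists:
  assumes conn: "connected_graph V E" and fin: "finite E" and sub: "\<forall>e\<in>E. e \<subseteq> V"
  shows "\<exists>c. (\<forall>e\<in>E. c e < card E) \<and> k_proper_coloring k V E c"
proof -
  obtain h where h: "bij_betw h E {0..<card E}" using ex_bij_betw_finite_nat[OF fin] by blast
  have inj: "inj_on h E" using h by (rule bij_betw_imp_inj_on)
  have img: "h ` E = {0..<card E}" using h by (rule bij_betw_imp_surj_on)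
  obtain ET where ET: "ET \<subseteq> E" "is_tree V ET" using tree_exists[OF conn fin sub] by blast
  have col: "\<forall>e\<in>E. h e < card E"
  proof
    fix e assume "e \<in> E"
    then have "h e \<in> {0..<card E}" using img by blast
    then show "h e < card E" by simp
  qed
  have sg: "subgraph V ET V E" unfolding subgraph_def using ET(1) sub by blast
  have pe: "proper_edges h ET" unfolding proper_edges_def
  proof (intro ballI impI)
    fix e1 e2 assume a: "e1 \<in> ET" "e2 \<in> ET" "e1 \<noteq> e2 \<and> e1 \<inter> e2 \<noteq> {}"
    have "e1 \<in> E" "e2 \<in> E" using a ET(1) by auto
    then show "h e1 \<noteq> h e2" using inj a(3) by (metis inj_on_contraD)
  qed
  have "k_proper_coloring k V E h" unfolding k_proper_coloring_def proper_tree_containing_def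
  proof (intro allI impI)
    fix S assume S: "S \<subseteq> V \<and> card S = k"
    have "subgraph V ET V E \<and> is_tree V ET \<and> S \<subseteq> V \<and> proper_edges h ET"
      using sg ET(2) S pe by simp
    then show "\<exists>VT ET. subgraph VT ET V E \<and> is_tree VT ET \<and> S \<subseteq> VT \<and> proper_edges h ET"
      by (intro exI)
  qed
  then show ?thesis using col by (intro exI[of _ h]) simp
qed

lemma induced_sub: "induced_edges E D \<subseteq> E" unfolding induced_edges_def by blast

lemma extend_coloring:
  assumes gr: "graph V E" and md: "min_degree_ge V E 3" and dom: "connected_k_dominating 3 V E D"
    and cD: "\<forall>e\<in>induced_edges E D. c e < n"
    and kp: "k_proper_coloring 3 D (induced_edges E D) c"
  shows "\<exists>c'. (\<forall>e\<in>E. c' e < n + 1) \<and> k_proper_coloring 3 V E c'"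
proof -
  let ?ED = "induced_edges E D"
  define c' where "c' = (\<lambda>e. if e \<subseteq> D then c e else n)"
  have DV: "D \<subseteq> V" and domv: "\<forall>v\<in>V - D. card {u \<in> D. {u, v} \<in> E} \<ge> 3"
    using dom unfolding connected_k_dominating_def k_dominating_def by auto
  have finV: "finite V" using gr unfolding graph_def by simp
  have finD: "finite D" using DV finV finite_subset by blast
  have Dne: "D \<noteq> {}" using dom unfolding connected_k_dominating_def connected_graph_def by simp
  have cardD: "card D \<ge> 3"
  proof (cases "V - D = {}")
    case False
    then obtain v where v: "v \<in> V - D" by blast
    have "3 \<le> card {u \<in> D. {u, v} \<in> E}" using domv v by blast
    also have "\<dots> \<le> card D" using finD by (intro card_mono) auto
    finally show ?thesis .
  next
    case True
    then have VD: "V = D" using DV by blast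
    obtain v where v: "v \<in> D" using Dne by blast
    have "3 \<le> degree V E v" using md v VD unfolding min_degree_ge_def by blast
    also have "\<dots> \<le> card V" unfolding degree_def using finV by (intro card_mono) auto
    finally show ?thesis using VD by simp
  qed
  have colors: "\<forall>e\<in>E. c' e < n + 1"
  proof
    fix e assume e: "e \<in> E"
    show "c' e < n + 1"
    proof (cases "e \<subseteq> D")
      case True
      then have "e \<in> ?ED" using e unfolding induced_edges_def by blast
      then show ?thesis using cD True unfolding c'_def by auto
    next
      case False then show ?thesis unfolding c'_def by simp
    qed
  qed
  have "k_proper_coloring 3 V E c'" unfolding k_proper_coloring_def
  proof (intro allI impI)
    fix S assume S: "S \<subseteq> V \<and> card S = 3"
    have SV0: "S \<subseteq> V" and cS: "card S = 3" using S by simp_all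
    have finS: "finite S" using SV0 finV by (rule finite_subset)
    let ?X = "S - D"
    let ?N = "\<lambda>x. {u \<in> D. {u, x} \<in> E}"
    have finX: "finite ?X" using finS by simp
    have cX: "card ?X \<le> 3" using card_mono[OF finS Diff_subset[of S D]] cS by simp
    have "\<forall>x\<in>?X. finite (?N x) \<and> card ?X \<le> card (?N x)"
    proof
      fix x assume x: "x \<in> ?X"
      have "x \<in> V - D" using x SV0 by auto
      have "3 \<le> card (?N x)" using domv \<open>x \<in> V - D\<close> by (rule bspec)
      then show "finite (?N x) \<and> card ?X \<le> card (?N x)" using finD cX by simp
    qed
    then have "\<exists>g. inj_on g ?X \<and> (\<forall>x\<in>?X. g x \<in> ?N x)" by (rule sdr[OF finX])
    then obtain g where g: "inj_on g ?X" "\<forall>x\<in>?X. g x \<in> ?N x" by blast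
    have gD: "\<forall>x\<in>?X. g x \<in> D" and gE: "\<forall>x\<in>?X. {g x, x} \<in> E" using g(2) by simp_all
    let ?S' = "(S \<inter> D) \<union> g ` ?X"
    have S'D: "?S' \<subseteq> D" using gD by auto
    have "card ?S' \<le> card (S \<inter> D) + card (g ` ?X)" by (rule card_Un_le)
    also have "\<dots> \<le> card (S \<inter> D) + card ?X" using card_image_le[OF finX] by simp
    also have "\<dots> = card S" using card_Int_Diff[OF finS, of D] by simp
    finally have cS': "card ?S' \<le> 3" using cS by simp
    obtain S'' where S'': "?S' \<subseteq> S''" "S'' \<subseteq> D" "card S'' = 3"
      using exists_subset_between[OF cS' cardD S'D finD] by blast
    have "S'' \<subseteq> D \<and> card S'' = 3" using S'' by simp
    then have "proper_tree_containing D ?ED c S''" using kp unfolding k_proper_coloring_def by blast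
    then obtain VT ET where T: "subgraph VT ET D ?ED" "is_tree VT ET" "S'' \<subseteq> VT" "proper_edges c ET"
      unfolding proper_tree_containing_def by blast
    have VTD: "VT \<subseteq> D" and ETD: "ET \<subseteq> ?ED" and subT: "\<forall>e\<in>ET. e \<subseteq> VT"
      using T(1) unfolding subgraph_def by simp_all
    have disj: "?X \<inter> VT = {}" using VTD by auto
    have gVT: "\<forall>x\<in>?X. g x \<in> VT" using S''(1) T(3) by auto
    let ?P = "(\<lambda>x. {x, g x}) ` ?X"
    have tree: "is_tree (VT \<union> ?X) (ET \<union> ?P)" by (rule add_leaves[OF T(2) subT disj gVT])
    have sg: "subgraph (VT \<union> ?X) (ET \<union> ?P) V E" unfolding subgraph_def
    proof (intro conjI)
      show "VT \<union> ?X \<subseteq> V" using VTD DV SV0 by auto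
      have "ET \<subseteq> E" using ETD induced_sub by (rule subset_trans)
      moreover have "?P \<subseteq> E" using gE by (auto simp: insert_commute)
      ultimately show "ET \<union> ?P \<subseteq> E" by simp
      show "\<forall>e\<in>ET \<union> ?P. e \<subseteq> VT \<union> ?X" using subT gVT by auto
    qed
    have SV: "S \<subseteq> VT \<union> ?X" using S''(1) T(3) by auto
    have ETsubD: "\<forall>e\<in>ET. e \<subseteq> D" using ETD unfolding induced_edges_def by blast
    have PnotD: "\<forall>e\<in>?P. \<not> e \<subseteq> D" by blast
    have "proper_edges c' (ET \<union> ?P)" unfolding proper_edges_def
    proof (intro ballI impI)
      fix e1 e2 assume e1: "e1 \<in> ET \<union> ?P" and e2: "e2 \<in> ET \<union> ?P" and ne: "e1 \<noteq> e2 \<and> e1 \<inter> e2 \<noteq> {}"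
      show "c' e1 \<noteq> c' e2"
      proof (cases "e1 \<in> ET")
        case True note t1 = this
        show ?thesis
        proof (cases "e2 \<in> ET")
          case True
          then have "c e1 \<noteq> c e2" using t1 ne T(4) unfolding proper_edges_def by blast
          then show ?thesis using True t1 ETsubD unfolding c'_def by simp
        next
          case False
          then have "e2 \<in> ?P" using e2 by blast
          then have "c' e2 = n" using PnotD unfolding c'_def by auto
          moreover have "c' e1 < n" using t1 ETsubD ETD cD unfolding c'_def by auto
          ultimately show ?thesis by simp
        qed
      next
        case False note f1 = this
        then have p1: "e1 \<in> ?P" using e1 by blast
        show ?thesis
        proof (cases "e2 \<in> ET")
          case True
          have "c' e1 = n" using p1 PnotD unfolding c'_def by auto
          moreover have "c' e2 < n" using True ETsubD ETD cD unfolding c'_def by auto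
          ultimately show ?thesis by simp
        next
          case False
          then have p2: "e2 \<in> ?P" using e2 by blast
          obtain x1 where x1: "x1 \<in> ?X" "e1 = {x1, g x1}" using p1 by blast
          obtain x2 where x2: "x2 \<in> ?X" "e2 = {x2, g x2}" using p2 by blast
          have "x1 \<noteq> x2" using ne x1 x2 by blast
          then have "g x1 \<noteq> g x2" using g(1) x1 x2 unfolding inj_on_def by blast
          moreover have "x1 \<noteq> g x2" "x2 \<noteq> g x1" "x1 \<noteq> x2" using x1 x2 gD \<open>x1 \<noteq> x2\<close> by auto
          ultimately have "e1 \<inter> e2 = {}" using x1 x2 by auto
          then show ?thesis using ne by simp
        qed
      qed
    qed
    then have "subgraph (VT \<union> ?X) (ET \<union> ?P) V E \<and> is_tree (VT \<union> ?X) (ET \<union> ?P) \<and> S \<subseteq> VT \<union> ?X \<and> proper_edges c' (ET \<union> ?P)"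
      using sg tree SV by (intro conjI)
    then show "proper_tree_containing V E c' S"
      unfolding proper_tree_containing_def by (intro exI)
  qed
  then show ?thesis using colors by (intro exI[of _ c'] conjI)
qed

lemma part1:
  assumes gr: "graph V E" and md: "min_degree_ge V E 3" and dom: "connected_k_dominating 3 V E D"
  shows "pxk 3 V E \<le> pxk 3 D (induced_edges E D) + 1"
proof -
  let ?ED = "induced_edges E D"
  let ?Q = "\<lambda>n. \<exists>c. (\<forall>e\<in>?ED. c e < n) \<and> k_proper_coloring 3 D ?ED c"
  have finE: "finite E" by (rule graph_finE[OF gr])
  have conn: "connected_graph D ?ED" using dom unfolding connected_k_dominating_def by blast
  have finED: "finite ?ED" using finE induced_sub by (rule finite_subset[rotated])
  have subED: "\<forall>e\<in>?ED. e \<subseteq> D" unfolding induced_edges_def by simp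
  have "?Q (card ?ED)" by (rule coloring_exists[OF conn finED subED])
  then have "?Q (pxk 3 D ?ED)" unfolding pxk_def by (rule LeastI)
  then obtain c where c: "\<forall>e\<in>?ED. c e < pxk 3 D ?ED" "k_proper_coloring 3 D ?ED c" by blast
  obtain c' where "\<forall>e\<in>E. c' e < pxk 3 D ?ED + 1" "k_proper_coloring 3 V E c'"
    using extend_coloring[OF gr md dom c] by blast
  then have "\<exists>c. (\<forall>e\<in>E. c e < pxk 3 D ?ED + 1) \<and> k_proper_coloring 3 V E c" by (intro exI conjI)
  then show ?thesis unfolding pxk_def[of 3 V E] by (rule Least_le)
qed

lemma closed_contra:
  assumes conn: "connected_graph VT ET" and u: "u \<in> VT" "u \<in> A" and v: "v \<in> VT" "v \<notin> A"
    and cl: "\<And>e a. e \<in> ET \<Longrightarrow> a \<in> e \<Longrightarrow> a \<in> A \<Longrightarrow> e \<subseteq> A"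
  shows False
proof -
  obtain e where e: "e \<in> ET" "e \<inter> A \<noteq> {}" "\<not> e \<subseteq> A" using sep[OF conn u(1) u(2) v] by blast
  obtain a where "a \<in> e" "a \<in> A" using e(2) by blast
  then have "e \<subseteq> A" using cl e(1) by blast
  then show False using e(3) by simp
qed

lemma two_el: "e = {u,v} \<Longrightarrow> x \<in> e \<Longrightarrow> p \<in> e \<Longrightarrow> x \<noteq> p \<Longrightarrow> e = {x,p}"
  by auto

lemma card3_other:
  assumes "card D = 3" "finite D"
  shows "\<exists>q\<in>D. q \<noteq> a \<and> q \<noteq> b"
proof (rule ccontr)
  assume "\<not> (\<exists>q\<in>D. q \<noteq> a \<and> q \<noteq> b)"
  then have "D \<subseteq> {a,b}" by blast
  then have "card D \<le> card {a,b}" by (intro card_mono) simp_all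
  also have "\<dots> \<le> 2" by (rule card_insert_le_m1) simp_all
  finally show False using assms by simp
qed

lemma no_tree:
  assumes conn: "connected_graph VT ET"
    and subT: "\<forall>e\<in>ET. e \<subseteq> VT"
    and two: "\<forall>e\<in>ET. \<exists>u v. e = {u,v} \<and> u \<noteq> v"
    and meetD: "\<forall>e\<in>ET. e \<inter> D \<noteq> {}"
    and cD: "card D = 3" and finD: "finite D"
    and cTr: "card Tr = 3" and TrV: "Tr \<subseteq> VT" and TrD: "Tr \<inter> D = {}"
    and deg: "\<And>v e1 e2 e3. e1 \<in> ET \<Longrightarrow> e2 \<in> ET \<Longrightarrow> e3 \<in> ET \<Longrightarrow> v \<in> e1 \<Longrightarrow> v \<in> e2 \<Longrightarrow> v \<in> e3
        \<Longrightarrow> e1 \<noteq> e2 \<Longrightarrow> e1 \<noteq> e3 \<Longrightarrow> e2 \<noteq> e3 \<Longrightarrow> False"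
    and F2: "\<And>p x y. p \<in> D \<Longrightarrow> x \<in> Tr \<Longrightarrow> y \<in> Tr \<Longrightarrow> {x,p} \<in> ET \<Longrightarrow> {y,p} \<in> ET \<Longrightarrow> x = y"
  shows False
proof -
  have finTr: "finite Tr" using cTr by (metis card_ge_0_finite zero_less_numeral)
  have outD: "\<exists>p\<in>D. e = {x,p}" if e: "e \<in> ET" "x \<in> e" "x \<notin> D" for e x
  proof -
    obtain u v where uv: "e = {u,v}" "u \<noteq> v" using two e(1) by blast
    obtain p where p: "p \<in> e" "p \<in> D" using meetD e(1) by blast
    have "p \<noteq> x" using p(2) e(3) by blast
    then have "e = {x,p}" using two_el[OF uv(1) e(2) p(1)] by simp
    then show ?thesis using p(2) by blast
  qed
  have nbr: "\<exists>p\<in>D. {x,p} \<in> ET" if x: "x \<in> Tr" for x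
  proof -
    have "\<exists>y\<in>Tr. y \<noteq> x" using card3_other[OF cTr finTr, of x x] by blast
    then obtain y where y: "y \<in> Tr" "y \<noteq> x" by blast
    have "x \<in> VT" "y \<in> VT" using x y TrV by auto
    then obtain e where e: "e \<in> ET" "e \<inter> {x} \<noteq> {}" "\<not> e \<subseteq> {x}"
      using sep[OF conn, of x "{x}" y] y(2) by auto
    have xe: "x \<in> e" using e(2) by blast
    have "x \<notin> D" using x TrD by blast
    then obtain p where "p \<in> D" "e = {x,p}" using outD[OF e(1) xe] by blast
    then show ?thesis using e(1) by blast
  qed
  define nb where "nb x = (SOME p. p \<in> D \<and> {x,p} \<in> ET)" for x
  have nb: "nb x \<in> D" "{x, nb x} \<in> ET" if "x \<in> Tr" for x
  proof -
    have "\<exists>p. p \<in> D \<and> {x,p} \<in> ET" using nbr[OF that] by blast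
    then have "nb x \<in> D \<and> {x, nb x} \<in> ET" unfolding nb_def by (rule someI_ex)
    then show "nb x \<in> D" "{x, nb x} \<in> ET" by simp_all
  qed
  have inj: "inj_on nb Tr"
  proof (rule inj_onI)
    fix x y assume xy: "x \<in> Tr" "y \<in> Tr" "nb x = nb y"
    have "{y, nb x} \<in> ET" using nb(2)[OF xy(2)] xy(3) by simp
    then show "x = y" using F2[OF nb(1)[OF xy(1)] xy(1) xy(2) nb(2)[OF xy(1)]] by simp
  qed
  have img: "nb ` Tr = D"
  proof (rule card_subset_eq[OF finD])
    show "nb ` Tr \<subseteq> D" using nb(1) by blast
    show "card (nb ` Tr) = card D" using card_image[OF inj] cTr cD by simp
  qed
  have uniq: "p = nb x" if h: "x \<in> Tr" "p \<in> D" "{x,p} \<in> ET" for x p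
  proof -
    obtain y where y: "y \<in> Tr" "p = nb y" using h(2) img by blast
    have "x = y" using F2[OF h(2) h(1) y(1) h(3)] nb(2)[OF y(1)] y(2) by simp
    then show ?thesis using y(2) by simp
  qed
  have atTr: "e = {x, nb x}" if h: "x \<in> Tr" "e \<in> ET" "x \<in> e" for x e
  proof -
    have "x \<notin> D" using h(1) TrD by blast
    then obtain p where p: "p \<in> D" "e = {x,p}" using outD[OF h(2) h(3)] by blast
    have "p = nb x" using uniq[OF h(1) p(1)] p(2) h(2) by simp
    then show ?thesis using p(2) by simp
  qed
  have DVT: "D \<subseteq> VT"
  proof
    fix p assume "p \<in> D"
    then obtain x where x: "x \<in> Tr" "p = nb x" using img by blast
    have "{x, nb x} \<subseteq> VT" using subT nb(2)[OF x(1)] by blast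
    then show "p \<in> VT" using x(2) by simp
  qed
  have at2: "e = ea \<or> e = eb" if h: "ea \<in> ET" "eb \<in> ET" "v \<in> ea" "v \<in> eb" "ea \<noteq> eb" "e \<in> ET" "v \<in> e" for v ea eb e
  proof (rule ccontr)
    assume "\<not> (e = ea \<or> e = eb)"
    then show False using deg[OF h(1) h(2) h(6) h(3) h(4) h(7) h(5)] by blast
  qed
  have XnD: "x \<notin> D" if "x \<in> Tr" for x using that TrD by blast
  obtain x1 where x1: "x1 \<in> Tr" using cTr by (metis card.empty ex_in_conv zero_neq_numeral)
  define p where "p = nb x1"
  have pD: "p \<in> D" and e1: "{x1,p} \<in> ET" using nb[OF x1] unfolding p_def by auto
  have x1A: "\<And>e. e \<in> ET \<Longrightarrow> x1 \<in> e \<Longrightarrow> e = {x1,p}" using atTr[OF x1] unfolding p_def by blast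
  have x1VT: "x1 \<in> VT" using x1 TrV by blast
  have x1nD: "x1 \<notin> D" by (rule XnD[OF x1])
  show False
  proof (cases "\<forall>e\<in>ET. p \<in> e \<longrightarrow> e = {x1,p}")
    case True
    obtain q where q: "q \<in> D" "q \<noteq> p" using card3_other[OF cD finD, of p p] by blast
    show False
    proof (rule closed_contra[OF conn x1VT, of "{x1,p}" q])
      show "x1 \<in> {x1,p}" by simp
      show "q \<in> VT" using q DVT by blast
      show "q \<notin> {x1,p}" using q x1nD by auto
      fix e a assume ea: "e \<in> ET" "a \<in> e" "a \<in> {x1,p}"
      then have "e = {x1,p}" using x1A True by auto
      then show "e \<subseteq> {x1,p}" by simp
    qed
  next
    case False
    then obtain e' where e': "e' \<in> ET" "p \<in> e'" "e' \<noteq> {x1,p}" by blast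
    have "p \<noteq> x1" using pD x1nD by blast
    obtain w where w: "e' = {p,w}" "w \<noteq> p"
    proof -
      obtain u v where uv: "e' = {u,v}" "u \<noteq> v" using two e'(1) by blast
      show ?thesis
      proof (cases "u = p")
        case True then show ?thesis using that uv by blast
      next
        case False then have "v = p" using uv e'(2) by blast
        then show ?thesis using that uv by (metis insert_commute)
      qed
    qed
    have wx1: "w \<noteq> x1" using w e'(3) by (metis insert_commute)
    have pedges: "\<And>e. e \<in> ET \<Longrightarrow> p \<in> e \<Longrightarrow> e = {x1,p} \<or> e = {p,w}"
      using at2[OF e1 e'(1)] e'(2,3) w(1) by auto
    have pwE: "{p,w} \<in> ET" using e'(1) w(1) by simp
    have wVT: "w \<in> VT" using subT pwE by blast
    show False
    proof (cases "w \<in> D")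
      case True
      obtain x2 where x2: "x2 \<in> Tr" "w = nb x2" using True img by blast
      have x2nD: "x2 \<notin> D" by (rule XnD[OF x2(1)])
      have e2: "{x2,w} \<in> ET" using nb(2)[OF x2(1)] x2(2) by simp
      have ne: "{x2,w} \<noteq> {p,w}" using x2nD pD by (metis doubleton_eq_iff w(2))
      have wedges: "\<And>e. e \<in> ET \<Longrightarrow> w \<in> e \<Longrightarrow> e = {x2,w} \<or> e = {p,w}"
        using at2[where v=w and ea="{x2,w}" and eb="{p,w}", OF e2 pwE _ _ ne] by simp
      have x2A: "\<And>e. e \<in> ET \<Longrightarrow> x2 \<in> e \<Longrightarrow> e = {x2,w}" using atTr[OF x2(1)] x2(2) by simp
      obtain q where q: "q \<in> D" "q \<noteq> p" "q \<noteq> w" using card3_other[OF cD finD, of p w] by blast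
      let ?A = "{x1,p,x2,w}"
      show False
      proof (rule closed_contra[OF conn x1VT, of ?A q])
        show "x1 \<in> ?A" by simp
        show "q \<in> VT" using q DVT by blast
        show "q \<notin> ?A" using q x1nD x2nD by auto
        fix e a assume ea: "e \<in> ET" "a \<in> e" "a \<in> ?A"
        then have "a = x1 \<or> a = p \<or> a = x2 \<or> a = w" by simp
        then show "e \<subseteq> ?A"
        proof (elim disjE)
          assume "a = x1" then have "e = {x1,p}" using x1A ea by simp
          then show ?thesis by auto
        next
          assume "a = p" then have "e = {x1,p} \<or> e = {p,w}" using pedges ea by simp
          then show ?thesis by auto
        next
          assume "a = x2" then have "e = {x2,w}" using x2A ea by simp
          then show ?thesis by auto
        next
          assume "a = w" then have "e = {x2,w} \<or> e = {p,w}" using wedges ea by simp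
          then show ?thesis by auto
        qed
      qed
    next
      case False
      note wnD = False
      have wnTr: "w \<notin> Tr"
      proof
        assume wT: "w \<in> Tr"
        have "{w,p} \<in> ET" using pwE by (simp add: insert_commute)
        then have "p = nb w" using uniq[OF wT pD] by simp
        then have "nb w = nb x1" unfolding p_def by simp
        then have "w = x1" using inj wT x1 unfolding inj_on_def by blast
        then show False using wx1 by simp
      qed
      show False
      proof (cases "\<forall>e\<in>ET. w \<in> e \<longrightarrow> e = {p,w}")
        case True
        obtain q where q: "q \<in> D" "q \<noteq> p" using card3_other[OF cD finD, of p p] by blast
        let ?A = "{x1,p,w}"
        show False
        proof (rule closed_contra[OF conn x1VT, of ?A q])
          show "x1 \<in> ?A" by simp
          show "q \<in> VT" using q DVT by blast
          show "q \<notin> ?A" using q x1nD wnD by auto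
          fix e a assume ea: "e \<in> ET" "a \<in> e" "a \<in> ?A"
          then have "a = x1 \<or> a = p \<or> a = w" by simp
          then show "e \<subseteq> ?A"
          proof (elim disjE)
            assume "a = x1" then have "e = {x1,p}" using x1A ea by simp
            then show ?thesis by auto
          next
            assume "a = p" then have "e = {x1,p} \<or> e = {p,w}" using pedges ea by simp
            then show ?thesis by auto
          next
            assume "a = w" then have "e = {p,w}" using True ea by simp
            then show ?thesis by auto
          qed
        qed
      next
        case False
        then obtain e'' where e'': "e'' \<in> ET" "w \<in> e''" "e'' \<noteq> {p,w}" by blast
        obtain s where s: "s \<in> D" "e'' = {w,s}" using outD[OF e''(1) e''(2) wnD] by blast
        have sp: "s \<noteq> p" using s(2) e''(3) by (metis insert_commute)
        have sw: "s \<noteq> w" using s(1) wnD by blast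
        obtain x2 where x2: "x2 \<in> Tr" "s = nb x2" using s(1) img by blast
        have x2nD: "x2 \<notin> D" by (rule XnD[OF x2(1)])
        have wsE: "{w,s} \<in> ET" using e'' s by simp
        have wedges: "\<And>e. e \<in> ET \<Longrightarrow> w \<in> e \<Longrightarrow> e = {p,w} \<or> e = {w,s}"
          using at2[OF pwE wsE] e''(3) s(2) by auto
        have e2: "{x2,s} \<in> ET" using nb(2)[OF x2(1)] x2(2) by simp
        have x2w: "x2 \<noteq> w" using x2(1) wnTr by blast
        have ne: "{x2,s} \<noteq> {w,s}" using x2w sw by (metis doubleton_eq_iff)
        have sedges: "\<And>e. e \<in> ET \<Longrightarrow> s \<in> e \<Longrightarrow> e = {x2,s} \<or> e = {w,s}"
          using at2[where v=s and ea="{x2,s}" and eb="{w,s}", OF e2 wsE _ _ ne] by simp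
        have x2A: "\<And>e. e \<in> ET \<Longrightarrow> x2 \<in> e \<Longrightarrow> e = {x2,s}" using atTr[OF x2(1)] x2(2) by simp
        obtain q where q: "q \<in> D" "q \<noteq> p" "q \<noteq> s" using card3_other[OF cD finD, of p s] by blast
        let ?A = "{x1,p,w,s,x2}"
        show False
        proof (rule closed_contra[OF conn x1VT, of ?A q])
          show "x1 \<in> ?A" by simp
          show "q \<in> VT" using q DVT by blast
          show "q \<notin> ?A" using q x1nD x2nD wnD by auto
          fix e a assume ea: "e \<in> ET" "a \<in> e" "a \<in> ?A"
          then have "a = x1 \<or> a = p \<or> a = w \<or> a = s \<or> a = x2" by simp
          then show "e \<subseteq> ?A"
          proof (elim disjE)
            assume "a = x1" then have "e = {x1,p}" using x1A ea by simp
            then show ?thesis by auto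
          next
            assume "a = p" then have "e = {x1,p} \<or> e = {p,w}" using pedges ea by simp
            then show ?thesis by auto
          next
            assume "a = w" then have "e = {p,w} \<or> e = {w,s}" using wedges ea by simp
            then show ?thesis by auto
          next
            assume "a = s" then have "e = {x2,s} \<or> e = {w,s}" using sedges ea by simp
            then show ?thesis by auto
          next
            assume "a = x2" then have "e = {x2,s}" using x2A ea by simp
            then show ?thesis by auto
          qed
        qed
      qed
    qed
  qed
qed

definition V0 :: "nat set" where "V0 = {0..<20}"
definition D0 :: "nat set" where "D0 = {0,1,2}"
definition X0 :: "nat set" where "X0 = {3..<20}"
definition E0 :: "nat set set" where
  "E0 = insert {0,1} (insert {1,2} ((\<lambda>(p,x). {p,x}) ` (D0 \<times> X0)))"

lemma E0_px: "p \<in> D0 \<Longrightarrow> x \<in> X0 \<Longrightarrow> {p,x} \<in> E0"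
  unfolding E0_def by (intro insertI2) (rule rev_image_eqI[of "(p,x)"], simp_all)

lemma E0_xp: "p \<in> D0 \<Longrightarrow> x \<in> X0 \<Longrightarrow> {x,p} \<in> E0"
  using E0_px by (simp add: insert_commute)

lemma E0_cases: "e \<in> E0 \<Longrightarrow> e = {0,1} \<or> e = {1,2} \<or> (\<exists>p x. p \<in> D0 \<and> x \<in> X0 \<and> e = {p,x})"
  unfolding E0_def by auto

lemma V0_split: "V0 = D0 \<union> X0" unfolding V0_def D0_def X0_def by auto

lemma DX_disj: "D0 \<inter> X0 = {}" unfolding D0_def X0_def by auto

lemma X0_ne: "x \<in> X0 \<Longrightarrow> x \<notin> D0" using DX_disj by blast

lemma finV0: "finite V0" unfolding V0_def by simp
lemma finD0: "finite D0" unfolding D0_def by simp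
lemma cardD0: "card D0 = 3" unfolding D0_def by simp
lemma cardX0: "card X0 = 17" unfolding X0_def by simp

lemma E0_edge: "e \<in> E0 \<Longrightarrow> \<exists>u v. e = {u,v} \<and> u \<in> V0 \<and> v \<in> V0 \<and> u \<noteq> v"
proof -
  assume e: "e \<in> E0"
  from E0_cases[OF e] show ?thesis
  proof (elim disjE exE conjE)
    assume "e = {0,1}" then show ?thesis unfolding V0_def by (intro exI[of _ 0] exI[of _ 1]) simp
  next
    assume "e = {1,2}" then show ?thesis unfolding V0_def by (intro exI[of _ 1] exI[of _ 2]) simp
  next
    fix p x assume h: "p \<in> D0" "x \<in> X0" "e = {p,x}"
    have "p \<noteq> x" using h X0_ne by blast
    moreover have "p \<in> V0" "x \<in> V0" using h(1,2) V0_split by auto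
    ultimately show ?thesis using h(3) by blast
  qed
qed

lemma E0_meets: "e \<in> E0 \<Longrightarrow> e \<inter> D0 \<noteq> {}"
  using E0_cases[of e] unfolding D0_def by auto

lemma graph0: "graph V0 E0"
  unfolding graph_def using finV0 E0_edge by blast

lemma hub_connected:
  assumes r: "r \<in> V" and h: "\<And>u. u \<in> V \<Longrightarrow> u \<noteq> r \<Longrightarrow> {u,r} \<in> E"
  shows "connected_graph V E"
  unfolding connected_graph_def
proof (intro conjI ballI)
  show "V \<noteq> {}" using r by blast
next
  fix u v assume u: "u \<in> V" and v: "v \<in> V"
  define xs where "xs = (if u = r then [] else [u]) @ [r] @ (if v = r then [] else [v])"
  have "xs \<noteq> [] \<and> hd xs = u \<and> last xs = v \<and> set xs \<subseteq> V \<and> walk E xs"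
  proof (cases "u = r"; cases "v = r")
    assume "u = r" "v = r" then show ?thesis unfolding xs_def using r by simp
  next
    assume "u = r" "v \<noteq> r" then show ?thesis unfolding xs_def using r v h[OF v] by (simp add: insert_commute)
  next
    assume "u \<noteq> r" "v = r" then show ?thesis unfolding xs_def using r u h[OF u] by simp
  next
    assume "u \<noteq> r" "v \<noteq> r" then show ?thesis unfolding xs_def using r u v h[OF u] h[OF v]
      by (simp add: insert_commute)
  qed
  then show "\<exists>xs. xs \<noteq> [] \<and> hd xs = u \<and> last xs = v \<and> set xs \<subseteq> V \<and> walk E xs" by blast
qed

lemma conn0: "connected_graph V0 E0"
proof (rule hub_connected[of 1])
  show "1 \<in> V0" unfolding V0_def by simp
  fix u assume u: "u \<in> V0" "u \<noteq> 1"
  show "{u,1} \<in> E0"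
  proof (cases "u \<in> X0")
    case True then show ?thesis using E0_xp[of 1 u] unfolding D0_def by simp
  next
    case False
    then have "u \<in> D0" using u V0_split by blast
    then have "u = 0 \<or> u = 2" using u(2) unfolding D0_def by simp
    then show ?thesis unfolding E0_def by (auto simp: insert_commute)
  qed
qed

lemma ED0: "induced_edges E0 D0 = {{0,1},{1,2}}"
proof
  show "induced_edges E0 D0 \<subseteq> {{0,1},{1,2}}"
  proof
    fix e assume "e \<in> induced_edges E0 D0"
    then have e: "e \<in> E0" "e \<subseteq> D0" unfolding induced_edges_def by auto
    from E0_cases[OF e(1)] show "e \<in> {{0,1},{1,2}}"
    proof (elim disjE exE conjE)
      fix p x assume h: "p \<in> D0" "x \<in> X0" "e = {p,x}"
      then have "x \<in> D0" using e(2) by blast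
      then show ?thesis using h(2) X0_ne by blast
    qed simp_all
  qed
next
  show "{{0,1},{1,2}} \<subseteq> induced_edges E0 D0"
    unfolding induced_edges_def E0_def D0_def by auto
qed

lemma deg_ge3: "v \<in> V0 \<Longrightarrow> 3 \<le> degree V0 E0 v"
proof -
  assume v: "v \<in> V0"
  have fin: "finite {u \<in> V0. {u, v} \<in> E0}" using finV0 by simp
  obtain a b c where abc: "a \<in> V0" "b \<in> V0" "c \<in> V0" "{a,v} \<in> E0" "{b,v} \<in> E0" "{c,v} \<in> E0"
    "a \<noteq> b" "a \<noteq> c" "b \<noteq> c"
  proof (cases "v \<in> X0")
    case True
    show ?thesis by (rule that[of 0 1 2]) (use True E0_px[of _ v] in \<open>simp_all add: D0_def V0_def\<close>)
  next
    case False
    then have "v \<in> D0" using v V0_split by blast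
    then have "v = 0 \<or> v = 1 \<or> v = 2" unfolding D0_def by simp
    then show ?thesis
    proof (elim disjE)
      assume v0: "v = 0"
      have "{1::nat,0} \<in> E0" unfolding E0_def by (simp add: insert_commute)
      moreover have "{3::nat,0} \<in> E0" "{4::nat,0} \<in> E0" by (rule E0_xp, simp_all add: D0_def X0_def)+
      ultimately show ?thesis using v0 by (intro that[of 1 3 4]) (simp_all add: V0_def)
    next
      assume v1: "v = 1"
      have "{0::nat,1} \<in> E0" "{2::nat,1} \<in> E0" unfolding E0_def by (simp_all add: insert_commute)
      moreover have "{3::nat,1} \<in> E0" by (rule E0_xp, simp_all add: D0_def X0_def)+
      ultimately show ?thesis using v1 by (intro that[of 0 2 3]) (simp_all add: V0_def)
    next
      assume v2: "v = 2"
      have "{1::nat,2} \<in> E0" unfolding E0_def by (simp add: insert_commute)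
      moreover have "{3::nat,2} \<in> E0" "{4::nat,2} \<in> E0" by (rule E0_xp, simp_all add: D0_def X0_def)+
      ultimately show ?thesis using v2 by (intro that[of 1 3 4]) (simp_all add: V0_def)
    qed
  qed
  have "{a,b,c} \<subseteq> {u \<in> V0. {u, v} \<in> E0}" using abc by simp
  then have "card {a,b,c} \<le> card {u \<in> V0. {u, v} \<in> E0}" using fin by (rule card_mono[rotated])
  moreover have "card {a,b,c} = 3" using abc by simp
  ultimately show ?thesis unfolding degree_def by simp
qed

lemma dom0: "connected_k_dominating 3 V0 E0 D0"
  unfolding connected_k_dominating_def k_dominating_def
proof (intro conjI ballI)
  show "D0 \<subseteq> V0" using V0_split by blast
next
  fix v assume v: "v \<in> V0 - D0"
  then have vX: "v \<in> X0" using V0_split by blast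
  have "D0 \<subseteq> {u \<in> D0. {u, v} \<in> E0}" using E0_px[OF _ vX] by blast
  then have "card D0 \<le> card {u \<in> D0. {u, v} \<in> E0}" using finD0 by (intro card_mono) simp_all
  then show "3 \<le> card {u \<in> D0. {u, v} \<in> E0}" using cardD0 by simp
next
  show "connected_graph D0 (induced_edges E0 D0)" unfolding ED0
  proof (rule hub_connected[of 1])
    show "1 \<in> D0" unfolding D0_def by simp
    fix u assume "u \<in> D0" "u \<noteq> 1"
    then have "u = 0 \<or> u = 2" unfolding D0_def by auto
    then show "{u,1} \<in> {{0,1},{1,2}}" by (auto simp: insert_commute)
  qed
qed

definition cD0 :: "nat set \<Rightarrow> nat" where "cD0 e = (if e = {0,1} then 0 else 1)"

lemma tree_D0: "is_tree D0 {{0,1},{1,2}}"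
  unfolding is_tree_def
proof
  show "connected_graph D0 {{0,1},{1,2}}"
  proof (rule hub_connected[of 1])
    show "1 \<in> D0" unfolding D0_def by simp
    fix u assume "u \<in> D0" "u \<noteq> 1"
    then have "u = 0 \<or> u = 2" unfolding D0_def by simp
    then show "{u,1} \<in> {{0,1},{1,2}}" by (auto simp: insert_commute)
  qed
  show "acyclic_graph D0 {{0,1},{1,2}}" unfolding acyclic_graph_def
  proof
    assume "\<exists>xs. set xs \<subseteq> D0 \<and> is_cycle {{0,1},{1,2}} xs"
    then obtain xs where sx: "set xs \<subseteq> D0" and cyc: "is_cycle {{0,1},{1,2}} xs" by blast
    have d: "distinct xs" and n3: "length xs \<ge> 3"
      and ed: "\<forall>i<length xs. {xs!i, xs!((i+1) mod length xs)} \<in> {{0,1},{1,2}}"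
      using cyc unfolding is_cycle_def by auto
    have "length xs = card (set xs)" using distinct_card[OF d] by simp
    also have "\<dots> \<le> card D0" using sx finD0 by (rule card_mono[rotated])
    finally have n: "length xs = 3" using n3 cardD0 by simp
    have one: "1 \<in> e" if "e \<in> {{0::nat,1},{1,2}}" for e using that by auto
    have e0: "{xs!0, xs!1} \<in> {{0::nat,1},{1,2}}" using ed[rule_format, of 0] n by simp
    have e1: "{xs!1, xs!2} \<in> {{0::nat,1},{1,2}}" using ed[rule_format, of 1] n by (simp add: numeral_2_eq_2)
    have e2: "{xs!2, xs!0} \<in> {{0::nat,1},{1,2}}" using ed[rule_format, of 2] n by (simp add: numeral_2_eq_2)
    have a: "1 \<in> {xs!0, xs!1}" by (rule one[OF e0])
    have b: "1 \<in> {xs!1, xs!2}" by (rule one[OF e1])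
    have c: "1 \<in> {xs!2, xs!0}" by (rule one[OF e2])
    have "xs!0 \<noteq> xs!1" "xs!1 \<noteq> xs!2" "xs!0 \<noteq> xs!2" using d n by (simp_all add: nth_eq_iff_index_eq)
    then show False using a b c by auto
  qed
qed

lemma QD0: "(\<forall>e\<in>induced_edges E0 D0. cD0 e < 2) \<and> k_proper_coloring 3 D0 (induced_edges E0 D0) cD0"
proof
  show "\<forall>e\<in>induced_edges E0 D0. cD0 e < 2" unfolding cD0_def by simp
  show "k_proper_coloring 3 D0 (induced_edges E0 D0) cD0"
    unfolding k_proper_coloring_def proper_tree_containing_def
  proof (intro allI impI)
    fix S assume S: "S \<subseteq> D0 \<and> card S = 3"
    have sg: "subgraph D0 {{0,1},{1,2}} D0 (induced_edges E0 D0)"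
      unfolding subgraph_def ED0 by (simp add: D0_def)
    have ne: "{1::nat,2} \<noteq> {0,1}" by (simp add: doubleton_eq_iff)
    have pe: "proper_edges cD0 {{0,1},{1,2}}" unfolding proper_edges_def
    proof (intro ballI impI)
      fix e1 e2 assume h: "e1 \<in> {{0::nat,1},{1,2}}" "e2 \<in> {{0::nat,1},{1,2}}" "e1 \<noteq> e2 \<and> e1 \<inter> e2 \<noteq> {}"
      have h1: "e1 = {0,1} \<or> e1 = {1,2}" using h(1) by simp
      have h2: "e2 = {0,1} \<or> e2 = {1,2}" using h(2) by simp
      have neq: "e1 \<noteq> e2" using h(3) by simp
      show "cD0 e1 \<noteq> cD0 e2"
        using h1 h2
      proof (elim disjE)
        assume "e1 = {0,1}" "e2 = {0,1}" then show ?thesis using neq by simp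
      next
        assume "e1 = {0,1}" "e2 = {1,2}" then show ?thesis using ne unfolding cD0_def by simp
      next
        assume "e1 = {1,2}" "e2 = {0,1}" then show ?thesis using ne unfolding cD0_def by simp
      next
        assume "e1 = {1,2}" "e2 = {1,2}" then show ?thesis using neq by simp
      qed
    qed
    show "\<exists>VT ET. subgraph VT ET D0 (induced_edges E0 D0) \<and> is_tree VT ET \<and> S \<subseteq> VT \<and> proper_edges cD0 ET"
      using sg tree_D0 S pe by (intro exI[of _ D0] exI[of _ "{{0,1},{1,2}}"]) simp
  qed
qed

lemma pxkD0: "pxk 3 D0 (induced_edges E0 D0) \<le> 2"
  unfolding pxk_def by (rule Least_le) (use QD0 in blast)

lemma md0: "min_degree_ge V0 E0 3"
  unfolding min_degree_ge_def using deg_ge3 by blast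

lemma pxkG: "3 \<le> pxk 3 V0 E0"
proof (rule ccontr)
  assume lt: "\<not> 3 \<le> pxk 3 V0 E0"
  let ?Q = "\<lambda>n. \<exists>c. (\<forall>e\<in>E0. c e < n) \<and> k_proper_coloring 3 V0 E0 c"
  have "?Q (2 + 1)"
    using extend_coloring[OF graph0 md0 dom0 conjunct1[OF QD0] conjunct2[OF QD0]] by simp
  then have "?Q (pxk 3 V0 E0)" unfolding pxk_def by (rule LeastI)
  then obtain c where c: "\<forall>e\<in>E0. c e < pxk 3 V0 E0" "k_proper_coloring 3 V0 E0 c" by blast
  have c2: "c e < 2" if "e \<in> E0" for e using c(1) that lt by fastforce
  define pat where "pat x = (c {0,x}, c {1,x}, c {2,x})" for x
  let ?F = "\<lambda>y. {x \<in> X0. pat x = y}"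
  have patin: "pat ` X0 \<subseteq> {..<2} \<times> {..<2} \<times> {..<2}"
  proof
    fix z assume "z \<in> pat ` X0"
    then obtain x where x: "x \<in> X0" "z = pat x" by blast
    have "{0,x} \<in> E0" "{1,x} \<in> E0" "{2,x} \<in> E0" using x(1) by (simp_all add: E0_px D0_def)
    then show "z \<in> {..<2} \<times> {..<2} \<times> {..<2}" using x(2) c2 unfolding pat_def by simp
  qed
  have "card (pat ` X0) \<le> card ({..<2::nat} \<times> {..<2::nat} \<times> {..<2::nat})"
    by (rule card_mono[OF _ patin]) simp
  then have cp: "card (pat ` X0) \<le> 8" by simp
  have "\<exists>y. 3 \<le> card (?F y)"
  proof (rule ccontr)
    assume nex: "\<not> (\<exists>y. 3 \<le> card (?F y))"
    have le2: "card (?F y) \<le> 2" for y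
    proof -
      have "\<not> 3 \<le> card (?F y)" using nex by blast
      then show ?thesis by simp
    qed
    have eq: "X0 = (\<Union>y\<in>pat ` X0. ?F y)" by blast
    have "card X0 \<le> (\<Sum>y\<in>pat ` X0. card (?F y))"
      by (subst eq, rule card_UN_le) (simp add: X0_def)
    also have "\<dots> \<le> of_nat (card (pat ` X0)) * 2" by (rule sum_bounded_above) (rule le2)
    also have "\<dots> \<le> 16" using cp by simp
    finally show False using cardX0 by simp
  qed
  then obtain y where y: "3 \<le> card (?F y)" by blast
  obtain Tr where Tr: "Tr \<subseteq> ?F y" "card Tr = 3" using obtain_subset_with_card_n[OF y] by blast
  have TrX: "Tr \<subseteq> X0" using Tr(1) by blast
  have TrV: "Tr \<subseteq> V0" using TrX V0_split by blast
  have patTr: "pat x = y" if "x \<in> Tr" for x using Tr(1) that by blast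
  have "proper_tree_containing V0 E0 c Tr" using c(2) TrV Tr(2) unfolding k_proper_coloring_def by blast
  then obtain VT ET where T: "subgraph VT ET V0 E0" "is_tree VT ET" "Tr \<subseteq> VT" "proper_edges c ET"
    unfolding proper_tree_containing_def by blast
  have ETE: "ET \<subseteq> E0" and subT: "\<forall>e\<in>ET. e \<subseteq> VT" using T(1) unfolding subgraph_def by simp_all
  have conn: "connected_graph VT ET" using T(2) unfolding is_tree_def by simp
  have propc: "c e1 \<noteq> c e2" if "e1 \<in> ET" "e2 \<in> ET" "e1 \<noteq> e2" "e1 \<inter> e2 \<noteq> {}" for e1 e2
    using T(4) that unfolding proper_edges_def by blast
  show False
  proof (rule no_tree[OF conn subT _ _ cardD0 finD0 Tr(2) _ _ _ _])
    show "\<forall>e\<in>ET. \<exists>u v. e = {u,v} \<and> u \<noteq> v" using ETE E0_edge by blast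
    show "\<forall>e\<in>ET. e \<inter> D0 \<noteq> {}" using ETE E0_meets by blast
    show "Tr \<subseteq> VT" by (rule T(3))
    show "Tr \<inter> D0 = {}" using TrX DX_disj by blast
  next
    fix v e1 e2 e3 assume h: "e1 \<in> ET" "e2 \<in> ET" "e3 \<in> ET" "v \<in> e1" "v \<in> e2" "v \<in> e3"
      "e1 \<noteq> e2" "e1 \<noteq> e3" "e2 \<noteq> e3"
    have "c e1 \<noteq> c e2" using propc[OF h(1) h(2) h(7)] h(4,5) by blast
    moreover have "c e1 \<noteq> c e3" using propc[OF h(1) h(3) h(8)] h(4,6) by blast
    moreover have "c e2 \<noteq> c e3" using propc[OF h(2) h(3) h(9)] h(5,6) by blast
    moreover have "c e1 < 2" "c e2 < 2" "c e3 < 2" using h(1-3) ETE c2 by auto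
    ultimately show False by linarith
  next
    fix p x z assume h: "p \<in> D0" "x \<in> Tr" "z \<in> Tr" "{x,p} \<in> ET" "{z,p} \<in> ET"
    show "x = z"
    proof (rule ccontr)
      assume xz: "x \<noteq> z"
      have "{x,p} \<noteq> {z,p}" using xz by (auto simp: doubleton_eq_iff)
      moreover have "{x,p} \<inter> {z,p} \<noteq> {}" by blast
      ultimately have ne: "c {x,p} \<noteq> c {z,p}" using propc[OF h(4) h(5)] by blast
      have "pat x = pat z" using patTr h(2,3) by simp
      then have eqs: "c {0,x} = c {0,z}" "c {1,x} = c {1,z}" "c {2,x} = c {2,z}" unfolding pat_def by simp_all
      have "p = 0 \<or> p = 1 \<or> p = 2" using h(1) unfolding D0_def by simp
      then have "c {p,x} = c {p,z}" using eqs by auto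
      then show False using ne by (simp add: insert_commute)
    qed
  qed
qed

theorem theorem3p4:
  shows "(\<forall>(V :: 'a set) E D. graph V E \<and> connected_graph V E \<and> min_degree_ge V E 3 \<and>
            connected_k_dominating 3 V E D \<longrightarrow>
            pxk 3 V E \<le> pxk 3 D (induced_edges E D) + 1)
       \<and> (\<exists>(V :: nat set) E D. graph V E \<and> connected_graph V E \<and> min_degree_ge V E 3 \<and>
            connected_k_dominating 3 V E D \<and>
            pxk 3 V E = pxk 3 D (induced_edges E D) + 1)"
proof
  show "\<forall>(V :: 'a set) E D. graph V E \<and> connected_graph V E \<and> min_degree_ge V E 3 \<and>
            connected_k_dominating 3 V E D \<longrightarrow>
            pxk 3 V E \<le> pxk 3 D (induced_edges E D) + 1"
  proof (intro allI impI)
    fix V :: "'a set" and E D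
    assume h: "graph V E \<and> connected_graph V E \<and> min_degree_ge V E 3 \<and> connected_k_dominating 3 V E D"
    have gr: "graph V E" and md: "min_degree_ge V E 3" and dom: "connected_k_dominating 3 V E D"
      using h by simp_all
    show "pxk 3 V E \<le> pxk 3 D (induced_edges E D) + 1" by (rule part1[OF gr md dom])
  qed
next
  have eq: "pxk 3 V0 E0 = pxk 3 D0 (induced_edges E0 D0) + 1"
    using part1[OF graph0 md0 dom0] pxkD0 pxkG by linarith
  show "\<exists>(V :: nat set) E D. graph V E \<and> connected_graph V E \<and> min_degree_ge V E 3 \<and>
            connected_k_dominating 3 V E D \<and>
            pxk 3 V E = pxk 3 D (induced_edges E D) + 1"
    using graph0 conn0 md0 dom0 eq by (intro exI[of _ V0] exI[of _ E0] exI[of _ D0]) simp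
qed

end
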